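(* For any diagonal section $\delta$, the function $U_\delta\colon[0,1]^2\to[0,1]$ defined by $$U_\delta(x,y)=\min\left\{x,\;y,\;y-\frac12\left(\widehat{\delta}(x)+\widehat{\delta}(y)+\mathrm{TV}_x^y(\widehat{\delta})\right)\right\}$$ is a copula with diagonal section $\delta$, i.e. $U_\delta$ is a copula and $U_\delta(t,t)=\delta(t)$ for all $t\in[0,1]$.
   Context: $\mathbb{I}=[0,1]$. A (bivariate) copula is a function $C\colon\mathbb{I}^2\to\mathbb{I}$ with $C(x,0)=C(0,y)=0$, $C(x,1)=x$, $C(1,y)=y$ for all $x,y$, and $C(b,d)+C(a,c)-C(b,c)-C(a,d)\ge 0$ for all $a\le b$, $c\le d$ in $\mathbb{I}$. A diagonal section is a function $\delta\colon\mathbb{I}\to\mathbb{I}$ with $\delta(x)\le x$ for all $x$, $0\le\delta(y)-\delta(x)\le 2(y-x)$ whenever $x\le y$, and $\delta(1)=1$. Write $\widehat{\delta}(x)=x-\delta(x)$. For $f\colon\mathbb{I}\to\mathbb{R}$ and $0\le x\le y\le1$, $\mathrm{TV}_x^y(f)=\sup\{\sum_{i=1}^n|f(x_i)-f(x_{i-1})|: x=x_0<x_1<\dots<x_n=y\}$ is the total variation of $f$ on $[x,y]$; for $y<x$ one sets $\mathrm{TV}_x^y(f)=-\mathrm{TV}_y^x(f)$. *)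

theory Defs
  imports Complex_Main
begin

definition is_copula :: "(real \<Rightarrow> real \<Rightarrow> real) \<Rightarrow> bool" where
  "is_copula C \<longleftrightarrow>
     (\<forall>x\<in>{0..1}. \<forall>y\<in>{0..1}. C x y \<in> {0..1}) \<and>
     (\<forall>x\<in>{0..1}. C x 0 = 0 \<and> C 0 x = 0 \<and> C x 1 = x \<and> C 1 x = x) \<and>
     (\<forall>a b c d. a \<in> {0..1} \<and> b \<in> {0..1} \<and> c \<in> {0..1} \<and> d \<in> {0..1} \<and> a \<le> b \<and> c \<le> d
        \<longrightarrow> C b d + C a c - C b c - C a d \<ge> 0)"

definition is_diagonal_section :: "(real \<Rightarrow> real) \<Rightarrow> bool" where
  "is_diagonal_section \<delta> \<longleftrightarrow>
     (\<forall>x\<in>{0..1}. \<delta> x \<in> {0..1} \<and> \<delta> x \<le> x) \<and>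
     (\<forall>x\<in>{0..1}. \<forall>y\<in>{0..1}. x \<le> y \<longrightarrow> 0 \<le> \<delta> y - \<delta> x \<and> \<delta> y - \<delta> x \<le> 2 * (y - x)) \<and>
     \<delta> 1 = 1"

definition diag_hat :: "(real \<Rightarrow> real) \<Rightarrow> real \<Rightarrow> real" where
  "diag_hat \<delta> x = x - \<delta> x"

definition TV_pos :: "(real \<Rightarrow> real) \<Rightarrow> real \<Rightarrow> real \<Rightarrow> real" where
  "TV_pos f x y = Sup {(\<Sum>i\<in>{1..n}. \<bar>f (p i) - f (p (i - 1))\<bar>) | n p.
       p 0 = x \<and> p n = y \<and> (\<forall>i<n. p i < p (Suc i))}"

definition TV :: "(real \<Rightarrow> real) \<Rightarrow> real \<Rightarrow> real \<Rightarrow> real" where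
  "TV f x y = (if x \<le> y then TV_pos f x y else - TV_pos f y x)"

definition U_delta :: "(real \<Rightarrow> real) \<Rightarrow> real \<Rightarrow> real \<Rightarrow> real" where
  "U_delta \<delta> x y = min x (min y (y - (diag_hat \<delta> x + diag_hat \<delta> y + TV (diag_hat \<delta>) x y) / 2))"

end

theory Submission
  imports Defs
begin

definition psum :: "(real \<Rightarrow> real) \<Rightarrow> (nat \<Rightarrow> real) \<Rightarrow> nat \<Rightarrow> real" where
  "psum f p n = (\<Sum>i\<in>{1..n}. \<bar>f (p i) - f (p (i - 1))\<bar>)"

definition Pset :: "(real \<Rightarrow> real) \<Rightarrow> real \<Rightarrow> real \<Rightarrow> real set" where
  "Pset f x y = {psum f p n | n p. p 0 = x \<and> p n = y \<and> (\<forall>i<n. p i < p (Suc i))}"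

lemma TV_pos_Pset: "TV_pos f x y = Sup (Pset f x y)"
  unfolding TV_pos_def Pset_def psum_def by simp

lemma psum_0[simp]: "psum f p 0 = 0"
  by (simp add: psum_def)

lemma psum_Suc: "psum f p (Suc n) = psum f p n + \<bar>f (p (Suc n)) - f (p n)\<bar>"
  by (simp add: psum_def)

lemma psum_cong: "(\<And>i. i \<le> n \<Longrightarrow> p i = q i) \<Longrightarrow> psum f p n = psum f q n"
  unfolding psum_def by (intro sum.cong) auto

lemma part_mono:
  fixes p :: "nat \<Rightarrow> real"
  assumes "\<forall>i<n. p i < p (Suc i)" "i \<le> j" "j \<le> n"
  shows "p i \<le> p j"
  using assms
proof (induction j)
  case 0 then have "i = 0" by simp
  then show ?case by simp
next
  case (Suc j)
  show ?case
  proof (cases "i = Suc j")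
    case False
    then have "p i \<le> p j" using Suc by auto
    moreover have "p j < p (Suc j)" using Suc by auto
    ultimately show ?thesis by simp
  qed simp
qed

locale lip =
  fixes f :: "real \<Rightarrow> real"
  assumes lip: "\<And>u v. u \<in> {0..1} \<Longrightarrow> v \<in> {0..1} \<Longrightarrow> \<bar>f u - f v\<bar> \<le> \<bar>u - v\<bar>"
begin

lemma psum_bound:
  assumes "\<forall>i<n. p i < p (Suc i)" "0 \<le> p 0" "p n \<le> 1"
  shows "psum f p n \<le> p n - p 0"
  using assms
proof (induction n)
  case 0 then show ?case by simp
next
  case (Suc n)
  have a: "p 0 \<le> p n" using part_mono[OF Suc.prems(1), of 0 n] by simp
  have b: "p n < p (Suc n)" using Suc.prems by simp
  have "psum f p n \<le> p n - p 0" using Suc a b by auto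
  moreover have "\<bar>f (p (Suc n)) - f (p n)\<bar> \<le> \<bar>p (Suc n) - p n\<bar>"
    using lip[of "p (Suc n)" "p n"] a b Suc.prems by auto
  ultimately show ?case using b by (simp add: psum_Suc)
qed

lemma Pset_bdd:
  assumes "0 \<le> x" "y \<le> 1"
  shows "bdd_above (Pset f x y)"
  unfolding bdd_above_def Pset_def using psum_bound assms by (intro exI[of _ "y - x"]) force

lemma Pset_ne:
  assumes "x \<le> y"
  shows "\<bar>f y - f x\<bar> \<in> Pset f x y"
proof (cases "x = y")
  case True
  then show ?thesis unfolding Pset_def
    by (intro CollectI exI[of _ 0] exI[of _ "\<lambda>_. x"]) auto
next
  case False
  then show ?thesis unfolding Pset_def using assms
    by (intro CollectI exI[of _ 1] exI[of _ "\<lambda>i. if i = 0 then x else y"]) (auto simp: psum_def)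
qed

lemma TV_upper:
  assumes "0 \<le> x" "y \<le> 1" "s \<in> Pset f x y"
  shows "s \<le> TV_pos f x y"
  unfolding TV_pos_Pset using Pset_bdd[OF assms(1,2)] assms(3) by (rule cSup_upper[rotated])

lemma TV_ge:
  assumes "0 \<le> x" "x \<le> y" "y \<le> 1"
  shows "\<bar>f y - f x\<bar> \<le> TV_pos f x y"
  using TV_upper Pset_ne assms by blast

lemma TV_le:
  assumes "0 \<le> x" "x \<le> y" "y \<le> 1"
  shows "TV_pos f x y \<le> y - x"
  unfolding TV_pos_Pset
proof (rule cSup_least)
  show "Pset f x y \<noteq> {}" using Pset_ne[OF assms(2)] by blast
  fix s assume "s \<in> Pset f x y"
  then show "s \<le> y - x" unfolding Pset_def using psum_bound assms by force
qed

lemma concat_psum: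
  assumes "q 0 = p n"
  shows "psum f (\<lambda>i. if i \<le> n then p i else q (i - n)) (n + m) = psum f p n + psum f q m"
proof (induction m)
  case 0
  have "psum f (\<lambda>i. if i \<le> n then p i else q (i - n)) n = psum f p n"
    by (rule psum_cong) simp
  then show ?case by simp
next
  case (Suc m)
  define r where "r = (\<lambda>i. if i \<le> n then p i else q (i - n))"
  have r1: "r (Suc (n + m)) = q (Suc m)" unfolding r_def by (simp add: Suc_diff_le)
  have r2: "r (n + m) = q m" unfolding r_def using assms by (cases m) auto
  have "psum f r (n + Suc m) = psum f r (n + m) + \<bar>f (r (Suc (n + m))) - f (r (n + m))\<bar>"
    by (simp add: psum_Suc)
  also have "\<dots> = psum f p n + psum f q m + \<bar>f (q (Suc m)) - f (q m)\<bar>"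
    using Suc.IH r1 r2 by (simp add: r_def)
  also have "\<dots> = psum f p n + psum f q (Suc m)" by (simp add: psum_Suc)
  finally show ?case by (simp add: r_def)
qed

lemma concat_in:
  assumes "a \<in> Pset f x y" "b \<in> Pset f y z"
  shows "a + b \<in> Pset f x z"
proof -
  obtain n p where p: "a = psum f p n" "p 0 = x" "p n = y" "\<forall>i<n. p i < p (Suc i)"
    using assms(1) unfolding Pset_def by blast
  obtain m q where q: "b = psum f q m" "q 0 = y" "q m = z" "\<forall>i<m. q i < q (Suc i)"
    using assms(2) unfolding Pset_def by blast
  define r where "r = (\<lambda>i. if i \<le> n then p i else q (i - n))"
  have "a + b = psum f r (n + m)" unfolding r_def using concat_psum p q by simp
  moreover have "r 0 = x" "r (n + m) = z" using p q by (auto simp: r_def)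
  moreover have "\<forall>i<n+m. r i < r (Suc i)"
  proof (intro allI impI)
    fix i assume "i < n + m"
    show "r i < r (Suc i)"
    proof (cases "i < n")
      case True then show ?thesis using p by (auto simp: r_def)
    next
      case False
      then have "Suc i - n = Suc (i - n)" "i - n < m" using \<open>i < n + m\<close> by auto
      then show ?thesis using q p False by (cases "i = n") (auto simp: r_def)
    qed
  qed
  ultimately show ?thesis unfolding Pset_def by blast
qed

lemma TV_super:
  assumes "0 \<le> x" "x \<le> y" "y \<le> z" "z \<le> 1"
  shows "TV_pos f x y + TV_pos f y z \<le> TV_pos f x z"
proof -
  have ne1: "Pset f x y \<noteq> {}" and ne2: "Pset f y z \<noteq> {}"
    using Pset_ne assms by blast+
  have key: "a + b \<le> TV_pos f x z" if "a \<in> Pset f x y" "b \<in> Pset f y z" for a b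
    using TV_upper[OF assms(1) assms(4) concat_in[OF that]] .
  have s1: "TV_pos f x y \<le> TV_pos f x z - b" if b: "b \<in> Pset f y z" for b
    unfolding TV_pos_Pset[of f x y]
  proof (rule cSup_least)
    show "Pset f x y \<noteq> {}" by (rule ne1)
    fix a assume "a \<in> Pset f x y"
    with key[OF this b] show "a \<le> TV_pos f x z - b" by linarith
  qed
  have "TV_pos f y z \<le> TV_pos f x z - TV_pos f x y"
    unfolding TV_pos_Pset[of f y z]
  proof (rule cSup_least)
    show "Pset f y z \<noteq> {}" by (rule ne2)
    fix b assume "b \<in> Pset f y z"
    with s1[OF this] show "b \<le> TV_pos f x z - TV_pos f x y" by linarith
  qed
  then show ?thesis by simp
qed

lemma TV_sub_aux:
  assumes "\<forall>i<n. p i < p (Suc i)" "p 0 = x" "0 \<le> x" "x \<le> y" "y \<le> p n" "p n \<le> 1"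
  shows "psum f p n \<le> TV_pos f x y + TV_pos f y (p n)"
  using assms
proof (induction n)
  case 0
  then have "y = x" by simp
  then show ?case using TV_ge[of x x] 0 by simp
next
  case (Suc n)
  define w where "w = p n"
  define z where "z = p (Suc n)"
  have xw: "x \<le> w" using part_mono[OF Suc.prems(1), of 0 n] Suc.prems by (simp add: w_def)
  have wz: "w < z" using Suc.prems by (simp add: w_def z_def)
  have ps: "psum f p (Suc n) = psum f p n + \<bar>f z - f w\<bar>" by (simp add: psum_Suc w_def z_def)
  have inc: "\<forall>i<n. p i < p (Suc i)" using Suc.prems by simp
  show ?case
  proof (cases "y \<le> w")
    case True
    have "psum f p n \<le> TV_pos f x y + TV_pos f y w"
    proof -
      have "p n \<le> 1" using wz Suc.prems(6) by (simp add: w_def z_def)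
      then show ?thesis using Suc.IH[OF inc] Suc.prems True by (simp add: w_def)
    qed
    moreover have "\<bar>f z - f w\<bar> \<le> TV_pos f w z" using TV_ge[of w z] xw wz Suc.prems by (simp add: z_def)
    moreover have "TV_pos f y w + TV_pos f w z \<le> TV_pos f y z"
      using TV_super[of y w z] True xw wz Suc.prems by (simp add: z_def)
    ultimately show ?thesis using ps by (simp add: z_def)
  next
    case False
    have "psum f p n \<in> Pset f x w" unfolding Pset_def using inc Suc.prems
      by (intro CollectI exI[of _ n] exI[of _ p]) (auto simp: w_def)
    then have "psum f p n \<le> TV_pos f x w" using TV_upper[of x w] xw wz Suc.prems by (simp add: z_def)
    moreover have "\<bar>f z - f w\<bar> \<le> \<bar>f y - f w\<bar> + \<bar>f z - f y\<bar>" by simp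
    moreover have "\<bar>f y - f w\<bar> \<le> TV_pos f w y" using TV_ge[of w y] xw False Suc.prems by simp
    moreover have "\<bar>f z - f y\<bar> \<le> TV_pos f y z" using TV_ge[of y z] xw False Suc.prems by (simp add: z_def)
    moreover have "TV_pos f x w + TV_pos f w y \<le> TV_pos f x y"
      using TV_super[of x w y] False xw Suc.prems by simp
    ultimately show ?thesis using ps by (simp add: z_def)
  qed
qed

lemma TV_add:
  assumes "0 \<le> x" "x \<le> y" "y \<le> z" "z \<le> 1"
  shows "TV_pos f x z = TV_pos f x y + TV_pos f y z"
proof -
  have "TV_pos f x z \<le> TV_pos f x y + TV_pos f y z"
    unfolding TV_pos_Pset[of f x z]
  proof (rule cSup_least)
    have "x \<le> z" using assms by linarith
    then show "Pset f x z \<noteq> {}" using Pset_ne[of x z] by blast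
    fix s assume "s \<in> Pset f x z"
    then obtain n p where np: "s = psum f p n" "p 0 = x" "p n = z" "\<forall>i<n. p i < p (Suc i)"
      unfolding Pset_def by blast
    have "psum f p n \<le> TV_pos f x y + TV_pos f y (p n)"
      by (rule TV_sub_aux) (use np assms in auto)
    then show "s \<le> TV_pos f x y + TV_pos f y z" using np by simp
  qed
  moreover have "TV_pos f x y + TV_pos f y z \<le> TV_pos f x z" by (rule TV_super[OF assms])
  ultimately show ?thesis by linarith
qed

end

lemma key_ineq:
  fixes a b c d ha hb hc hd Va Vb Vc Vd :: real
  assumes "hb - ha \<le> Vb - Va" "ha - hb \<le> Vb - Va" "Vb - Va \<le> b - a"
    "hd - hc \<le> Vd - Vc" "hc - hd \<le> Vd - Vc" "Vd - Vc \<le> d - c"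
  shows "min b (min d (d - (hb + hd + (Vd - Vb)) / 2)) + min a (min c (c - (ha + hc + (Vc - Va)) / 2))
    - min b (min c (c - (hb + hc + (Vc - Vb)) / 2)) - min a (min d (d - (ha + hd + (Vd - Va)) / 2)) \<ge> 0"
proof -
  define Ubd where "Ubd = min b (min d (d - (hb + hd + (Vd - Vb)) / 2))"
  define Uac where "Uac = min a (min c (c - (ha + hc + (Vc - Va)) / 2))"
  define Ubc where "Ubc = min b (min c (c - (hb + hc + (Vc - Vb)) / 2))"
  define Uad where "Uad = min a (min d (d - (ha + hd + (Vd - Va)) / 2))"
  have 1: "Ubd = b \<or> Ubd = d \<or> Ubd = d - (hb + hd + (Vd - Vb)) / 2" unfolding Ubd_def min_def by auto
  have 2: "Uac = a \<or> Uac = c \<or> Uac = c - (ha + hc + (Vc - Va)) / 2" unfolding Uac_def min_def by auto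
  have 3: "Ubc \<le> b" "Ubc \<le> c" "Ubc \<le> c - (hb + hc + (Vc - Vb)) / 2" unfolding Ubc_def by auto
  have 4: "Uad \<le> a" "Uad \<le> d" "Uad \<le> d - (ha + hd + (Vd - Va)) / 2" unfolding Uad_def by auto
  have 5: "Ubd \<le> b" "Ubd \<le> d" "Ubd \<le> d - (hb + hd + (Vd - Vb)) / 2" unfolding Ubd_def by auto
  have 6: "Uac \<le> a" "Uac \<le> c" "Uac \<le> c - (ha + hc + (Vc - Va)) / 2" unfolding Uac_def by auto
  have c00: "Ubd + Uac - Ubc - Uad \<ge> 0" if "Ubd = b" "Uac = a"
    using that 3(1) 4(1) assms by (simp add: field_simps)
  have c01: "Ubd + Uac - Ubc - Uad \<ge> 0" if "Ubd = b" "Uac = c"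
    using that 3(2) 4(1) assms by (simp add: field_simps)
  have c02: "Ubd + Uac - Ubc - Uad \<ge> 0" if "Ubd = b" "Uac = c - (ha + hc + (Vc - Va)) / 2"
    using that 3(3) 4(1) assms by (simp add: field_simps)
  have c10: "Ubd + Uac - Ubc - Uad \<ge> 0" if "Ubd = d" "Uac = a"
    using that 3(2) 4(1) assms by (simp add: field_simps)
  have c11: "Ubd + Uac - Ubc - Uad \<ge> 0" if "Ubd = d" "Uac = c"
    using that 3(2) 4(2) assms by (simp add: field_simps)
  have c12: "Ubd + Uac - Ubc - Uad \<ge> 0" if "Ubd = d" "Uac = c - (ha + hc + (Vc - Va)) / 2"
    using that 3(2) 4(3) assms by (simp add: field_simps)
  have c20: "Ubd + Uac - Ubc - Uad \<ge> 0" if "Ubd = d - (hb + hd + (Vd - Vb)) / 2" "Uac = a"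
    using that 3(3) 4(1) assms by (simp add: field_simps)
  have c21: "Ubd + Uac - Ubc - Uad \<ge> 0" if "Ubd = d - (hb + hd + (Vd - Vb)) / 2" "Uac = c"
    using that 3(2) 4(3) assms by (simp add: field_simps)
  have c22: "Ubd + Uac - Ubc - Uad \<ge> 0" if "Ubd = d - (hb + hd + (Vd - Vb)) / 2" "Uac = c - (ha + hc + (Vc - Va)) / 2"
    using that 3(3) 4(3) assms by (simp add: field_simps)
  have "Ubd + Uac - Ubc - Uad \<ge> 0"
    using 1 2 c00 c01 c02 c10 c11 c12 c20 c21 c22 by metis
  then show ?thesis unfolding Ubd_def Uac_def Ubc_def Uad_def .
qed

theorem theorem3p3:
  fixes \<delta> :: "real \<Rightarrow> real"
  assumes "is_diagonal_section \<delta>"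
  shows "is_copula (U_delta \<delta>) \<and> (\<forall>t\<in>{0..1}. U_delta \<delta> t t = \<delta> t)"
proof -
  have d1: "\<And>x. x \<in> {0..1} \<Longrightarrow> \<delta> x \<in> {0..1} \<and> \<delta> x \<le> x"
    and d2: "\<And>x y. x \<in> {0..1} \<Longrightarrow> y \<in> {0..1} \<Longrightarrow> x \<le> y \<Longrightarrow> 0 \<le> \<delta> y - \<delta> x \<and> \<delta> y - \<delta> x \<le> 2 * (y - x)"
    and d3: "\<delta> 1 = 1"
    using assms unfolding is_diagonal_section_def by auto
  define h where "h = diag_hat \<delta>"
  have hx: "h x = x - \<delta> x" for x by (simp add: h_def diag_hat_def)
  have h0: "h 0 = 0" using d1[of 0] by (simp add: hx)
  have h1: "h 1 = 0" using d3 by (simp add: hx)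
  have hpos: "0 \<le> h x" if "x \<in> {0..1}" for x using d1[OF that] by (simp add: hx)
  have hlip: "\<bar>h u - h v\<bar> \<le> \<bar>u - v\<bar>" if "u \<in> {0..1}" "v \<in> {0..1}" for u v
  proof (cases "u \<le> v")
    case True
    then show ?thesis using d2[OF that True] by (simp add: hx abs_if)
  next
    case False
    then show ?thesis using d2[OF that(2,1)] by (simp add: hx abs_if)
  qed
  have L: "lip h" unfolding lip_def using hlip by blast
  define V where "V x = TV_pos h 0 x" for x
  have V0: "V 0 = 0" using lip.TV_le[OF L , of 0 0] lip.TV_ge[OF L , of 0 0] by (simp add: V_def)
  have Vd: "TV_pos h x y = V y - V x" if "0 \<le> x" "x \<le> y" "y \<le> 1" for x y
    using lip.TV_add[OF L, of 0 x y] that by (simp add: V_def)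
  have TVeq: "TV h x y = V y - V x" if "x \<in> {0..1}" "y \<in> {0..1}" for x y
    using that Vd[of x y] Vd[of y x] by (auto simp: TV_def)
  have mon: "\<bar>h y - h x\<bar> \<le> V y - V x \<and> V y - V x \<le> y - x"
    if "0 \<le> x" "x \<le> y" "y \<le> 1" for x y
    using lip.TV_ge[OF L, OF that] lip.TV_le[OF L, OF that] Vd[OF that] by simp
  have Ueq: "U_delta \<delta> x y = min x (min y (y - (h x + h y + (V y - V x)) / 2))"
    if "x \<in> {0..1}" "y \<in> {0..1}" for x y
    using TVeq[OF that] by (simp add: U_delta_def h_def)
  have diag: "U_delta \<delta> t t = \<delta> t" if "t \<in> {0..1}" for t
    proof -
    have "U_delta \<delta> t t = min t (min t (t - (h t + h t) / 2))" using Ueq[OF that that] by simp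
    also have "\<dots> = t - h t" using hpos[OF that] by (simp add: min_def)
    finally show ?thesis by (simp add: hx)
  qed
  have bnd: "U_delta \<delta> x 0 = 0 \<and> U_delta \<delta> 0 x = 0 \<and> U_delta \<delta> x 1 = x \<and> U_delta \<delta> 1 x = x"
    if "x \<in> {0..1}" for x
  proof -
    have m1: "\<bar>h x - h 0\<bar> \<le> V x - V 0 \<and> V x - V 0 \<le> x - 0" using mon[of 0 x] that by simp
    have m2: "\<bar>h 1 - h x\<bar> \<le> V 1 - V x \<and> V 1 - V x \<le> 1 - x" using mon[of x 1] that by simp
    have "0 - (h x + h 0 + (V 0 - V x)) / 2 \<ge> 0" using m1 h0 V0 by (simp add: abs_le_iff)
    then have A: "U_delta \<delta> x 0 = 0" using Ueq[OF that, of 0] that by (simp add: min_def)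
    have "x - (h 0 + h x + (V x - V 0)) / 2 \<ge> 0" using m1 h0 V0 hpos[OF that] by (simp add: abs_le_iff)
    then have B: "U_delta \<delta> 0 x = 0" using Ueq[OF _ that, of 0] that by (simp add: min_def)
    have "h x \<le> V 1 - V x" "V 1 - V x \<le> 1 - x" using m2 h1 by (auto simp: abs_le_iff)
    then have "1 - (h x + h 1 + (V 1 - V x)) / 2 \<ge> x" using h1 by (simp add: field_simps)
    then have C: "U_delta \<delta> x 1 = x" using Ueq[OF that, of 1] that by (simp add: min_def)
    have "x - (h 1 + h x + (V x - V 1)) / 2 \<ge> x" using m2 h1 by (simp add: abs_le_iff)
    then have D: "U_delta \<delta> 1 x = x" using Ueq[OF _ that, of 1] that by (simp add: min_def)
    show ?thesis using A B C D by simp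
  qed
  have inc: "U_delta \<delta> b d + U_delta \<delta> a c - U_delta \<delta> b c - U_delta \<delta> a d \<ge> 0"
    if "a \<in> {0..1}" "b \<in> {0..1}" "c \<in> {0..1}" "d \<in> {0..1}" "a \<le> b" "c \<le> d" for a b c d
  proof -
    have m1: "\<bar>h b - h a\<bar> \<le> V b - V a \<and> V b - V a \<le> b - a" using mon[of a b] that by simp
    have m2: "\<bar>h d - h c\<bar> \<le> V d - V c \<and> V d - V c \<le> d - c" using mon[of c d] that by simp
    have e: "U_delta \<delta> b d + U_delta \<delta> a c - U_delta \<delta> b c - U_delta \<delta> a d =
      min b (min d (d - (h b + h d + (V d - V b)) / 2)) + min a (min c (c - (h a + h c + (V c - V a)) / 2))
    - min b (min c (c - (h b + h c + (V c - V b)) / 2)) - min a (min d (d - (h a + h d + (V d - V a)) / 2))"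
      unfolding Ueq[OF that(2) that(4)] Ueq[OF that(1) that(3)] Ueq[OF that(2) that(3)] Ueq[OF that(1) that(4)]
      by (rule refl)
    have p: "h b - h a \<le> V b - V a" "h a - h b \<le> V b - V a" "V b - V a \<le> b - a"
      "h d - h c \<le> V d - V c" "h c - h d \<le> V d - V c" "V d - V c \<le> d - c"
      using m1 m2 by (auto simp only: abs_le_iff)
    show ?thesis unfolding e by (rule key_ineq[OF p])
  qed
  have rng: "U_delta \<delta> x y \<in> {0..1}" if "x \<in> {0..1}" "y \<in> {0..1}" for x y
  proof -
    have "U_delta \<delta> x y + U_delta \<delta> 0 0 - U_delta \<delta> x 0 - U_delta \<delta> 0 y \<ge> 0"
      using inc[of 0 x 0 y] that by simp
    then have "0 \<le> U_delta \<delta> x y" using bnd that bnd[of 0] by simp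
    moreover have "U_delta \<delta> x y \<le> x" using Ueq[OF that] by simp
    ultimately show ?thesis using that by simp
  qed
  have "is_copula (U_delta \<delta>)" unfolding is_copula_def
  proof (intro conjI ballI allI impI)
    fix x y assume "x \<in> {0..1::real}" "y \<in> {0..1::real}"
    then show "U_delta \<delta> x y \<in> {0..1}" by (rule rng)
  next
    fix x assume x: "x \<in> {0..1::real}"
    show "U_delta \<delta> x 0 = 0" using bnd[OF x] by simp
    show "U_delta \<delta> 0 x = 0" using bnd[OF x] by simp
    show "U_delta \<delta> x 1 = x" using bnd[OF x] by simp
    show "U_delta \<delta> 1 x = x" using bnd[OF x] by simp
  next
    fix a b c d :: real
    assume "a \<in> {0..1} \<and> b \<in> {0..1} \<and> c \<in> {0..1} \<and> d \<in> {0..1} \<and> a \<le> b \<and> c \<le> d"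
    then show "U_delta \<delta> b d + U_delta \<delta> a c - U_delta \<delta> b c - U_delta \<delta> a d \<ge> 0"
      using inc by blast
  qed
  then show ?thesis using diag by blast
qed

end
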